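(* Let $N\in\mathbb{N}$. For a function $f:\mathbb{R}^N\to\mathbb{R}$, $V>0$ and $p\in(0,\infty)$ define $$\|f\|_{p,V}:=\sup\Big\{\Big(\frac{1}{|\Omega|}\int_{\Omega}|f(x)|^{p}\,dx\Big)^{1/p} : \Omega\subset\mathbb{R}^N \text{ open and convex},\ |\Omega|=V\Big\},$$ and let $L^p_V:=\{f\mid \|f\|_{p,V}<\infty\}$ modulo functions vanishing almost everywhere. Let $p\in[1,\infty)$ and $0<T<S$. Then for all $f\in L^p_S$, $$\|f\|_{p,S}^{p}\leq\frac{(\lfloor S/T\rfloor+1)\,T}{S}\,\|f\|_{p,T}^{p}\leq 2\,\|f\|_{p,T}^{p}.$$
   Context: $|\Omega|$ denotes the $N$-dimensional Lebesgue measure; functions are measurable; $\|f\|_{p,T}$ takes values in $[0,\infty]$; $\lfloor\cdot\rfloor$ is the floor function. *)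

theory Defs
  imports "HOL-Analysis.Analysis"
begin

definition ennreal_powr :: "ennreal \<Rightarrow> real \<Rightarrow> ennreal" where
  "ennreal_powr x r = (if x = top then top else ennreal (enn2real x powr r))"

definition pV_norm :: "real \<Rightarrow> real \<Rightarrow> ('a::euclidean_space \<Rightarrow> real) \<Rightarrow> ennreal" where
  "pV_norm p V f =
     (SUP \<Omega> \<in> {\<Omega>. open \<Omega> \<and> convex \<Omega> \<and> emeasure lebesgue \<Omega> = ennreal V}.
        ennreal_powr ((\<integral>\<^sup>+ x \<in> \<Omega>. ennreal (\<bar>f x\<bar> powr p) \<partial>lebesgue) / ennreal V) (1 / p))"

end

theory Submission
  imports Defs
begin

lemma hyper_null: "(e::'a::euclidean_space) \<noteq> 0 \<Longrightarrow> {x. e \<bullet> x = t} \<in> null_sets lebesgue"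
  using negligible_hyperplane[of e t] by (simp add: negligible_iff_null_sets)

lemma open_hs_lt: "open {x::'a::euclidean_space. e \<bullet> x < t}"
  by (intro open_Collect_less continuous_intros)
lemma open_hs_gt: "open {x::'a::euclidean_space. t < e \<bullet> x}"
  by (intro open_Collect_less continuous_intros)

lemma g_conv:
  fixes \<Omega> :: "'a::euclidean_space set" and X :: "nat \<Rightarrow> real"
  assumes op: "open \<Omega>" and fin: "emeasure lebesgue \<Omega> < \<infinity>"
    and h: "h \<in> borel_measurable lebesgue"
    and lim: "AE x in lebesgue. (\<lambda>n. indicator (\<Omega> \<inter> {x. e \<bullet> x < X n}) x) \<longlonglongrightarrow> (h x :: real)"
  shows "(\<lambda>n. measure lebesgue (\<Omega> \<inter> {x. e \<bullet> x < X n})) \<longlonglongrightarrow> integral\<^sup>L lebesgue h"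
proof -
  have s: "\<Omega> \<inter> {x. e \<bullet> x < t} \<in> sets lebesgue" for t
    using op open_hs_lt[of e t] by auto
  have "(\<lambda>n. integral\<^sup>L lebesgue (indicator (\<Omega> \<inter> {x. e \<bullet> x < X n}) :: 'a \<Rightarrow> real)) \<longlonglongrightarrow> integral\<^sup>L lebesgue h"
  proof (rule integral_dominated_convergence[where w="indicator \<Omega>"])
    show "h \<in> borel_measurable lebesgue" by fact
    show "indicat_real (\<Omega> \<inter> {x. e \<bullet> x < X i}) \<in> borel_measurable lebesgue" for i
      using s by auto
    show "integrable lebesgue (indicat_real \<Omega>)"
      using op fin by (auto simp: integrable_indicator_iff)
    show "AE x in lebesgue. (\<lambda>i. indicat_real (\<Omega> \<inter> {x. e \<bullet> x < X i}) x) \<longlonglongrightarrow> h x" by fact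
    show "AE x in lebesgue. norm (indicat_real (\<Omega> \<inter> {x. e \<bullet> x < X i}) x) \<le> indicat_real \<Omega> x" for i
      by (auto split: split_indicator)
  qed
  moreover have "integral\<^sup>L lebesgue (indicator (\<Omega> \<inter> {x. e \<bullet> x < t}) :: 'a \<Rightarrow> real) = measure lebesgue (\<Omega> \<inter> {x. e \<bullet> x < t})" for t
    by simp
  ultimately show ?thesis by simp
qed

lemma g_props:
  fixes \<Omega> :: "'a::euclidean_space set"
  assumes op: "open \<Omega>" and fin: "emeasure lebesgue \<Omega> = ennreal S" and e: "e \<noteq> 0"
    and S: "S \<ge> 0"
  defines "g \<equiv> \<lambda>t. measure lebesgue (\<Omega> \<inter> {x. e \<bullet> x < t})"
  shows "continuous_on UNIV g" and "\<And>a b. a \<le> b \<Longrightarrow> g a \<le> g b"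
    and "\<And>c. 0 < c \<Longrightarrow> c < S \<Longrightarrow> \<exists>t. g t = c"
proof -
  have s: "\<Omega> \<inter> {x. e \<bullet> x < t} \<in> sets lebesgue" for t
    using op open_hs_lt[of e t] by auto
  have fin': "emeasure lebesgue \<Omega> < \<infinity>" using fin by simp
  have so: "\<Omega> \<in> sets lebesgue" using op by auto
  show mono: "g a \<le> g b" if "a \<le> b" for a b
    unfolding g_def
  proof (rule measure_mono_fmeasurable)
    show "\<Omega> \<inter> {x. e \<bullet> x < a} \<subseteq> \<Omega> \<inter> {x. e \<bullet> x < b}" using that by auto
    show "\<Omega> \<inter> {x. e \<bullet> x < a} \<in> sets lebesgue" by (rule s)
    have "emeasure lebesgue (\<Omega> \<inter> {x. e \<bullet> x < b}) \<le> emeasure lebesgue \<Omega>"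
      by (rule emeasure_mono) (use so in auto)
    then show "\<Omega> \<inter> {x. e \<bullet> x < b} \<in> fmeasurable lebesgue"
      using fin' s by (auto intro!: fmeasurableI)
  qed
  show cont: "continuous_on UNIV g"
  proof (rule continuous_at_imp_continuous_on, intro ballI)
    fix t0 :: real
    show "isCont g t0"
      unfolding continuous_at_sequentially
    proof (intro allI impI)
      fix X :: "nat \<Rightarrow> real" assume X: "X \<longlonglongrightarrow> t0"
      have "(\<lambda>n. g (X n)) \<longlonglongrightarrow> integral\<^sup>L lebesgue (indicator (\<Omega> \<inter> {x. e \<bullet> x < t0}) :: 'a \<Rightarrow> real)"
        unfolding g_def
      proof (rule g_conv[OF op fin'])
        show "indicat_real (\<Omega> \<inter> {x. e \<bullet> x < t0}) \<in> borel_measurable lebesgue" using s by auto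
        show "AE x in lebesgue. (\<lambda>n. indicat_real (\<Omega> \<inter> {x. e \<bullet> x < X n}) x) \<longlonglongrightarrow> indicat_real (\<Omega> \<inter> {x. e \<bullet> x < t0}) x"
        proof (rule AE_I'[OF hyper_null[OF e, of t0]], safe)
          fix x assume nl: "\<not> (\<lambda>n. indicat_real (\<Omega> \<inter> {x. e \<bullet> x < X n}) x) \<longlonglongrightarrow> indicat_real (\<Omega> \<inter> {x. e \<bullet> x < t0}) x"
          show "e \<bullet> x = t0"
          proof (rule ccontr)
            assume ne: "e \<bullet> x \<noteq> t0"
            have "eventually (\<lambda>n. indicat_real (\<Omega> \<inter> {x. e \<bullet> x < X n}) x = indicat_real (\<Omega> \<inter> {x. e \<bullet> x < t0}) x) sequentially"
            proof (cases "e \<bullet> x < t0")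
              case True
              show ?thesis using order_tendstoD(1)[OF X True]
                by (rule eventually_mono) (use True in \<open>auto split: split_indicator\<close>)
            next
              case False
              with ne have gt: "t0 < e \<bullet> x" by auto
              show ?thesis using order_tendstoD(2)[OF X gt]
                by (rule eventually_mono) (use gt in \<open>auto split: split_indicator\<close>)
            qed
            then have "(\<lambda>n. indicat_real (\<Omega> \<inter> {x. e \<bullet> x < X n}) x) \<longlonglongrightarrow> indicat_real (\<Omega> \<inter> {x. e \<bullet> x < t0}) x"
              by (rule tendsto_eventually)
            with nl show False by simp
          qed
        qed
      qed
      then show "(g \<circ> X) \<longlonglongrightarrow> g t0" by (simp add: g_def o_def)
    qed
  qed
  fix c assume c: "0 < c" "c < S"
  have lt: "(\<lambda>n. g (real n)) \<longlonglongrightarrow> integral\<^sup>L lebesgue (indicator \<Omega> :: 'a \<Rightarrow> real)"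
    unfolding g_def
  proof (rule g_conv[OF op fin'])
    show "indicat_real \<Omega> \<in> borel_measurable lebesgue" using so by auto
    show "AE x in lebesgue. (\<lambda>n. indicat_real (\<Omega> \<inter> {x. e \<bullet> x < real n}) x) \<longlonglongrightarrow> indicat_real \<Omega> x"
    proof (rule AE_I2)
      fix x
      obtain N :: nat where "e \<bullet> x < real N" using reals_Archimedean2 by blast
      then have "eventually (\<lambda>n. indicat_real (\<Omega> \<inter> {x. e \<bullet> x < real n}) x = indicat_real \<Omega> x) sequentially"
        unfolding eventually_sequentially
        by (intro exI[of _ N]) (auto split: split_indicator)
      then show "(\<lambda>n. indicat_real (\<Omega> \<inter> {x. e \<bullet> x < real n}) x) \<longlonglongrightarrow> indicat_real \<Omega> x"
        by (rule tendsto_eventually)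
    qed
  qed
  have "integral\<^sup>L lebesgue (indicator \<Omega> :: 'a \<Rightarrow> real) = S"
    using fin S by (simp add: measure_def)
  with lt have lt: "(\<lambda>n. g (real n)) \<longlonglongrightarrow> S" by simp
  have lb: "(\<lambda>n. g (- real n)) \<longlonglongrightarrow> integral\<^sup>L lebesgue (\<lambda>x. 0 :: real)"
  proof -
    have "AE x in lebesgue. (\<lambda>n. indicat_real (\<Omega> \<inter> {x. e \<bullet> x < - real n}) x) \<longlonglongrightarrow> 0"
    proof (rule AE_I2)
      fix x
      obtain N :: nat where "- (e \<bullet> x) < real N" using reals_Archimedean2 by blast
      then have "eventually (\<lambda>n. indicat_real (\<Omega> \<inter> {x. e \<bullet> x < - real n}) x = 0) sequentially"
        unfolding eventually_sequentially
        by (intro exI[of _ N]) (auto split: split_indicator)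
      then show "(\<lambda>n. indicat_real (\<Omega> \<inter> {x. e \<bullet> x < - real n}) x) \<longlonglongrightarrow> 0"
        by (rule tendsto_eventually)
    qed
    from g_conv[OF op fin' _ this] show ?thesis unfolding g_def by simp
  qed
  then have lb: "(\<lambda>n. g (- real n)) \<longlonglongrightarrow> 0" by simp
  obtain n1 where n1: "g (- real n1) < c"
    using order_tendstoD(2)[OF lb c(1)] by (auto simp: eventually_sequentially)
  obtain n2 where n2: "c < g (real n2)"
    using order_tendstoD(1)[OF lt c(2)] by (auto simp: eventually_sequentially)
  have "\<exists>t. - real n1 \<le> t \<and> t \<le> real n2 \<and> g t = c"
    by (rule IVT') (use n1 n2 continuous_on_subset[OF cont] in auto)
  then show "\<exists>t. g t = c" by blast
qed

lemma pieces:
  fixes \<Omega> :: "'a::euclidean_space set"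
  assumes op: "open \<Omega>" and fin: "emeasure lebesgue \<Omega> = ennreal S" and e: "e \<noteq> 0"
    and S: "S \<ge> 0"
  defines "g \<equiv> \<lambda>t. measure lebesgue (\<Omega> \<inter> {x. e \<bullet> x < t})"
  shows "emeasure lebesgue (\<Omega> \<inter> {x. e \<bullet> x < b}) = ennreal (g b)"
    and "a \<le> b \<Longrightarrow> emeasure lebesgue (\<Omega> \<inter> {x. a < e \<bullet> x} \<inter> {x. e \<bullet> x < b}) = ennreal (g b - g a)"
    and "emeasure lebesgue (\<Omega> \<inter> {x. a < e \<bullet> x}) = ennreal (S - g a)"
proof -
  have s: "\<Omega> \<inter> {x. e \<bullet> x < t} \<in> sets lebesgue" for t
    using op open_hs_lt[of e t] by auto
  have so: "\<Omega> \<in> sets lebesgue" using op by auto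
  have fin': "emeasure lebesgue \<Omega> \<noteq> \<infinity>" using fin by simp
  have finA: "emeasure lebesgue A \<noteq> \<infinity>" if "A \<subseteq> \<Omega>" for A
  proof -
    have "emeasure lebesgue A \<le> emeasure lebesgue \<Omega>"
      by (rule emeasure_mono[OF that so])
    then show ?thesis using fin' by (auto simp: top_unique)
  qed
  have finA': "emeasure lebesgue A \<noteq> top" if "A \<subseteq> \<Omega>" for A
    using finA[OF that] by simp
  have hn: "A \<in> null_sets lebesgue" if "A \<subseteq> {x. e \<bullet> x = t}" for A t
    using negligible_subset[OF negligible_hyperplane[of e t] that] e by (simp add: negligible_iff_null_sets)
  show "emeasure lebesgue (\<Omega> \<inter> {x. e \<bullet> x < b}) = ennreal (g b)"
    unfolding g_def by (rule emeasure_eq_ennreal_measure, rule finA') auto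
  show "emeasure lebesgue (\<Omega> \<inter> {x. a < e \<bullet> x} \<inter> {x. e \<bullet> x < b}) = ennreal (g b - g a)" if ab: "a \<le> b"
  proof -
    define D where "D = (\<Omega> \<inter> {x. e \<bullet> x < b}) - (\<Omega> \<inter> {x. e \<bullet> x < a})"
    have mD: "measure lebesgue D = g b - g a"
      unfolding D_def g_def
      apply (rule measure_Diff) apply (rule finA) apply blast apply (rule s) apply (rule s) using ab by auto
    have Ds: "D \<in> sets lebesgue" unfolding D_def using s by auto
    have DU: "D = (\<Omega> \<inter> {x. a < e \<bullet> x} \<inter> {x. e \<bullet> x < b}) \<union> (D \<inter> (\<Omega> \<inter> {x. e \<bullet> x = a}))"
      unfolding D_def by auto
    have Ms: "\<Omega> \<inter> {x. a < e \<bullet> x} \<inter> {x. e \<bullet> x < b} \<in> sets lebesgue"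
      using op open_hs_lt[of e b] open_hs_gt[of a e] by (intro sets.Int) auto
    have "emeasure lebesgue D = emeasure lebesgue (\<Omega> \<inter> {x. a < e \<bullet> x} \<inter> {x. e \<bullet> x < b})"
      apply (subst DU)
      apply (rule emeasure_Un_null_set[OF Ms])
      by (rule hn[of _ a]) auto
    moreover have "emeasure lebesgue D = ennreal (measure lebesgue D)"
      by (rule emeasure_eq_ennreal_measure, rule finA') (auto simp: D_def)
    ultimately show ?thesis using mD by simp
  qed
  show "emeasure lebesgue (\<Omega> \<inter> {x. a < e \<bullet> x}) = ennreal (S - g a)"
  proof -
    define D where "D = \<Omega> - (\<Omega> \<inter> {x. e \<bullet> x < a})"
    have mO: "measure lebesgue \<Omega> = S" using fin S by (simp add: measure_def)
    have mD: "measure lebesgue D = S - g a"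
      unfolding D_def g_def mO[symmetric]
      by (rule measure_Diff[OF fin' so s]) auto
    have Ds: "D \<in> sets lebesgue" unfolding D_def using s so by auto
    have DU: "D = (\<Omega> \<inter> {x. a < e \<bullet> x}) \<union> (D \<inter> (\<Omega> \<inter> {x. e \<bullet> x = a}))"
      unfolding D_def by auto
    have Ms: "\<Omega> \<inter> {x. a < e \<bullet> x} \<in> sets lebesgue"
      using op open_hs_gt[of a e] by auto
    have "emeasure lebesgue D = emeasure lebesgue (\<Omega> \<inter> {x. a < e \<bullet> x})"
      apply (subst DU)
      apply (rule emeasure_Un_null_set[OF Ms])
      by (rule hn[of _ a]) auto
    moreover have "emeasure lebesgue D = ennreal (measure lebesgue D)"
      by (rule emeasure_eq_ennreal_measure, rule finA') (auto simp: D_def)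
    ultimately show ?thesis using mD by simp
  qed
qed


lemma cover:
  fixes \<Omega> :: "'a::euclidean_space set"
  assumes op: "open \<Omega>" and cv: "convex \<Omega>" and fin: "emeasure lebesgue \<Omega> = ennreal S"
    and T: "0 < T" "T < S"
  shows "\<exists>C. (\<forall>j\<le>nat \<lfloor>S/T\<rfloor>. open (C j) \<and> convex (C j) \<and> emeasure lebesgue (C j) = ennreal T)
             \<and> \<Omega> \<subseteq> (\<Union>j\<le>nat \<lfloor>S/T\<rfloor>. C j)"
proof -
  obtain e :: 'a where eB: "e \<in> Basis" using nonempty_Basis by blast
  then have e: "e \<noteq> 0" by auto
  have S0: "S \<ge> 0" using T by simp
  define g where "g = (\<lambda>t. measure lebesgue (\<Omega> \<inter> {x. e \<bullet> x < t}))"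
  have gmono: "g a \<le> g b" if "a \<le> b" for a b
    unfolding g_def by (rule g_props(2)[OF op fin e S0 that])
  have glt: "a < b" if "g a < g b" for a b
    using gmono[of b a] that by force
  have "\<forall>c. \<exists>t. 0 < c \<and> c < S \<longrightarrow> g t = c"
    unfolding g_def using g_props(3)[OF op fin e S0] by metis
  then obtain \<tau> where \<tau>: "\<And>c. 0 < c \<Longrightarrow> c < S \<Longrightarrow> g (\<tau> c) = c" by metis
  define n where "n = nat \<lfloor>S/T\<rfloor>"
  have ST: "1 < S/T" using T by simp
  have fl1: "1 \<le> \<lfloor>S/T\<rfloor>" using ST by linarith
  have rn: "real n = of_int \<lfloor>S/T\<rfloor>" unfolding n_def using fl1 by simp
  have n1: "1 \<le> n" using fl1 unfolding n_def by linarith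
  have f1: "of_int \<lfloor>S/T\<rfloor> \<le> S/T" and f2: "S/T < of_int \<lfloor>S/T\<rfloor> + 1" by linarith+
  have nle: "real n * T \<le> S" using pos_le_divide_eq[of T, THEN iffD1, OF T(1) f1] rn by simp
  have ngt: "S < (real n + 1) * T" using pos_divide_less_eq[of T, THEN iffD1, OF T(1) f2] rn by simp
  define \<delta> where "\<delta> = (S - T) / real n"
  have npos: "real n > 0" using n1 by simp
  have d0: "0 < \<delta>" unfolding \<delta>_def using T npos by simp
  have nd: "real n * \<delta> = S - T" unfolding \<delta>_def using npos by simp
  have dT: "\<delta> < T" unfolding \<delta>_def using npos ngt by (simp add: field_simps)
  define \<alpha> where "\<alpha> j = \<tau> (real j * \<delta>)" for j :: nat
  define \<beta> where "\<beta> j = \<tau> (real j * \<delta> + T)" for j :: nat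
  have jd_le: "real j * \<delta> \<le> S - T" if "j \<le> n" for j
    using mult_right_mono[of "real j" "real n" \<delta>] that d0 nd by simp
  have jd_lt: "real j * \<delta> < S - T" if "j < n" for j
    using mult_strict_right_mono[of "real j" "real n" \<delta>] that d0 nd by simp
  have ga: "g (\<alpha> j) = real j * \<delta>" if "1 \<le> j" "j \<le> n" for j
    unfolding \<alpha>_def
  proof (rule \<tau>)
    show "0 < real j * \<delta>" using that d0 by simp
    show "real j * \<delta> < S" using jd_le[OF that(2)] T by simp
  qed
  have gb: "g (\<beta> j) = real j * \<delta> + T" if "j < n" for j
    unfolding \<beta>_def
  proof (rule \<tau>)
    have "0 \<le> real j * \<delta>" using d0 by simp
    then show "0 < real j * \<delta> + T" using T by linarith
    show "real j * \<delta> + T < S" using jd_lt[OF that] by simp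
  qed
  have ab: "\<alpha> j < \<beta> j" if "1 \<le> j" "j < n" for j
    by (rule glt) (use ga[of j] gb[of j] that T in simp)
  have ab1: "\<alpha> (Suc j) < \<beta> j" if "j < n" for j
  proof (rule glt)
    have "real (Suc j) * \<delta> = real j * \<delta> + \<delta>" by (simp add: algebra_simps)
    then show "g (\<alpha> (Suc j)) < g (\<beta> j)" using ga[of "Suc j"] gb[of j] that dT by simp
  qed
  define C where "C j = (if j = 0 then \<Omega> \<inter> {x. e \<bullet> x < \<beta> 0}
      else if j = n then \<Omega> \<inter> {x. \<alpha> n < e \<bullet> x}
      else \<Omega> \<inter> {x. \<alpha> j < e \<bullet> x} \<inter> {x. e \<bullet> x < \<beta> j})" for j
  have Cprops: "open (C j) \<and> convex (C j) \<and> emeasure lebesgue (C j) = ennreal T" if "j \<le> n" for j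
  proof (cases "j = 0")
    case True
    have "emeasure lebesgue (C j) = ennreal (g (\<beta> 0))"
      using True pieces(1)[OF op fin e S0] unfolding C_def g_def by simp
    also have "g (\<beta> 0) = T" using gb[of 0] n1 by simp
    finally show ?thesis
      using True op cv open_hs_lt[of e] convex_halfspace_lt[of e]
      by (auto simp: C_def intro: convex_Int)
  next
    case False
    show ?thesis
    proof (cases "j = n")
      case True
      have "emeasure lebesgue (C j) = ennreal (S - g (\<alpha> n))"
        using True False pieces(3)[OF op fin e S0] unfolding C_def g_def by simp
      also have "S - g (\<alpha> n) = T" using ga[of n] n1 nd by simp
      finally show ?thesis
        using True False op cv open_hs_gt[of _ e] convex_halfspace_gt[of _ e]
        by (auto simp: C_def intro: convex_Int)
    next
      case jn: False
      with that False have j: "1 \<le> j" "j < n" by auto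
      have "emeasure lebesgue (C j) = ennreal (g (\<beta> j) - g (\<alpha> j))"
        using jn False pieces(2)[OF op fin e S0, of "\<alpha> j" "\<beta> j"] ab[OF j] unfolding C_def g_def by simp
      also have "g (\<beta> j) - g (\<alpha> j) = T" using ga[of j] gb[of j] j by simp
      finally show ?thesis
        using jn False op cv open_hs_gt[of _ e] convex_halfspace_gt[of _ e]
          open_hs_lt[of e] convex_halfspace_lt[of e]
        by (auto simp: C_def intro!: convex_Int open_Int)
    qed
  qed
  have covers: "\<Omega> \<subseteq> (\<Union>j\<le>n. C j)"
  proof
    fix x assume x: "x \<in> \<Omega>"
    define t where "t = e \<bullet> x"
    show "x \<in> (\<Union>j\<le>n. C j)"
    proof (cases "t < \<beta> 0")
      case True
      then have "x \<in> C 0" using x by (simp add: C_def t_def)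
      then show ?thesis by auto
    next
      case False
      define J where "J = {j. 1 \<le> j \<and> j \<le> n \<and> \<alpha> j < t}"
      have fJ: "finite J" unfolding J_def by auto
      have "1 \<in> J" using ab1[of 0] n1 False unfolding J_def by auto
      then have J0: "J \<noteq> {}" by auto
      define j where "j = Max J"
      have jJ: "j \<in> J" unfolding j_def using fJ J0 by (rule Max_in)
      then have j: "1 \<le> j" "j \<le> n" "\<alpha> j < t" unfolding J_def by auto
      show ?thesis
      proof (cases "j = n")
        case True
        then have "x \<in> C n" using x j n1 by (simp add: C_def t_def)
        then show ?thesis by auto
      next
        case False
        then have jn: "j < n" using j by simp
        have "Suc j \<notin> J"
        proof
          assume "Suc j \<in> J"
          then have "Suc j \<le> j" unfolding j_def using fJ by (simp add: Max_ge)
          then show False by simp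
        qed
        then have "t \<le> \<alpha> (Suc j)" using jn unfolding J_def by auto
        with ab1[OF jn] have "t < \<beta> j" by simp
        then have "x \<in> C j" using x j jn by (simp add: C_def t_def)
        then show ?thesis using j by auto
      qed
    qed
  qed
  show ?thesis
    using Cprops covers unfolding n_def by blast
qed


lemma int_union:
  fixes h :: "'a::euclidean_space \<Rightarrow> ennreal" and n :: nat
  assumes hm: "h \<in> borel_measurable lebesgue" and Cs: "\<And>j. j \<le> n \<Longrightarrow> C j \<in> sets lebesgue"
    and cov: "\<Omega> \<subseteq> (\<Union>j\<le>n. C j)"
  shows "(\<integral>\<^sup>+x\<in>\<Omega>. h x \<partial>lebesgue) \<le> (\<Sum>j\<le>n. \<integral>\<^sup>+x\<in>C j. h x \<partial>lebesgue)"
proof -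
  have "(\<integral>\<^sup>+x\<in>\<Omega>. h x \<partial>lebesgue) \<le> (\<integral>\<^sup>+x. (\<Sum>j\<le>n. h x * indicator (C j) x) \<partial>lebesgue)"
  proof (rule nn_integral_mono)
    fix x
    show "h x * indicator \<Omega> x \<le> (\<Sum>j\<le>n. h x * indicator (C j) x)"
    proof (cases "x \<in> \<Omega>")
      case True
      then obtain j where j: "j \<le> n" "x \<in> C j" using cov by auto
      have "h x * indicator \<Omega> x = h x * indicator (C j) x" using True j by simp
      also have "\<dots> \<le> (\<Sum>j\<le>n. h x * indicator (C j) x)"
        by (rule member_le_sum) (use j in auto)
      finally show ?thesis .
    qed simp
  qed
  also have "\<dots> = (\<Sum>j\<le>n. \<integral>\<^sup>+x. h x * indicator (C j) x \<partial>lebesgue)"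
    by (rule nn_integral_sum) (use hm Cs in auto)
  finally show ?thesis .
qed

theorem corollary2p5:
  fixes f :: "'a::euclidean_space \<Rightarrow> real" and p S T :: real
  assumes "1 \<le> p" and "0 < T" and "T < S"
    and "f \<in> borel_measurable lebesgue"
    and "pV_norm p S f < top"
  shows "ennreal_powr (pV_norm p S f) p
           \<le> ennreal ((real_of_int \<lfloor>S / T\<rfloor> + 1) * T / S) * ennreal_powr (pV_norm p T f) p
       \<and> ennreal ((real_of_int \<lfloor>S / T\<rfloor> + 1) * T / S) * ennreal_powr (pV_norm p T f) p
           \<le> 2 * ennreal_powr (pV_norm p T f) p"
proof -
  note p1 = assms(1) and T0 = assms(2) and TS = assms(3)
  have p0: "0 < p" using p1 by simp
  define A where "A V = {\<Omega>::'a set. open \<Omega> \<and> convex \<Omega> \<and> emeasure lebesgue \<Omega> = ennreal V}" for V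
  define I where "I \<Omega> = (\<integral>\<^sup>+ x \<in> \<Omega>. ennreal (\<bar>f x\<bar> powr p) \<partial>lebesgue)" for \<Omega>
  have pv: "pV_norm p V f = (SUP \<Omega>\<in>A V. ennreal_powr (I \<Omega> / ennreal V) (1/p))" for V
    by (simp add: pV_norm_def A_def I_def)
  define n where "n = nat \<lfloor>S/T\<rfloor>"
  define c where "c = (real_of_int \<lfloor>S/T\<rfloor> + 1) * T / S"
  have ST: "1 < S/T" using T0 TS by simp
  have fl1: "1 \<le> \<lfloor>S/T\<rfloor>" using ST by linarith
  have rn: "real n = of_int \<lfloor>S/T\<rfloor>" unfolding n_def using fl1 by simp
  have cn: "c = real (n+1) * T / S" unfolding c_def using rn by simp
  have c0: "0 < c" unfolding cn using T0 TS by simp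
  have c2: "c \<le> 2"
  proof -
    have f1: "of_int \<lfloor>S/T\<rfloor> \<le> S/T" by linarith
    have "of_int \<lfloor>S/T\<rfloor> * T \<le> S" using pos_le_divide_eq[of T, THEN iffD1, OF T0 f1] .
    then have "(real_of_int \<lfloor>S/T\<rfloor> + 1) * T \<le> 2 * S" using TS by (simp add: algebra_simps)
    then show ?thesis unfolding c_def using T0 TS by (simp add: pos_divide_le_eq)
  qed
  have hm: "(\<lambda>x. ennreal (\<bar>f x\<bar> powr p)) \<in> borel_measurable lebesgue"
    using assms(4) by measurable
  have powr_le: "y \<le> ennreal (q powr p)" if "ennreal_powr y (1/p) \<le> ennreal q" "0 \<le> q" for y q
  proof (cases y)
    case top
    then show ?thesis using that by (simp add: ennreal_powr_def top_unique)
  next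
    case (real r)
    then have "r powr (1/p) \<le> q" using that by (simp add: ennreal_powr_def)
    then have "(r powr (1/p)) powr p \<le> q powr p" by (intro powr_mono2) (use p0 in auto)
    moreover have "(r powr (1/p)) powr p = r" using real p0 by (simp add: powr_powr)
    ultimately show ?thesis using real that by simp
  qed
  have powr_le2: "ennreal_powr y (1/p) \<le> ennreal (q powr (1/p))" if "y \<le> ennreal q" "0 \<le> q" for y q
  proof (cases y)
    case top
    then show ?thesis using that by (simp add: top_unique)
  next
    case (real r)
    then have "r \<le> q" using that by simp
    then have "r powr (1/p) \<le> q powr (1/p)" by (intro powr_mono2) (use p0 real in auto)
    then show ?thesis using real by (simp add: ennreal_powr_def)
  qed
  have key: "pV_norm p S f \<le> ennreal ((c * q powr p) powr (1/p))" if qT: "pV_norm p T f \<le> ennreal q" and q0: "0 \<le> q" for q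
  proof -
    have bT: "I \<Omega> \<le> ennreal (T * q powr p)" if "\<Omega> \<in> A T" for \<Omega>
    proof -
      have "ennreal_powr (I \<Omega> / ennreal T) (1/p) \<le> pV_norm p T f"
        unfolding pv[of T] by (rule SUP_upper[OF that])
      then have "I \<Omega> / ennreal T \<le> ennreal (q powr p)"
        using qT q0 by (intro powr_le) auto
      then have "I \<Omega> / ennreal T * ennreal T \<le> ennreal (q powr p) * ennreal T"
        by (rule mult_right_mono) simp
      moreover have "I \<Omega> / ennreal T * ennreal T = I \<Omega>"
        using T0 by (simp add: ennreal_divide_times divide_ennreal)
      moreover have "ennreal (q powr p) * ennreal T = ennreal (T * q powr p)"
        using T0 by (simp add: ennreal_mult'' mult.commute)
      ultimately show ?thesis by simp
    qed
    show ?thesis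
      unfolding pv[of S]
    proof (rule SUP_least)
      fix \<Omega> assume "\<Omega> \<in> A S"
      then have op: "open \<Omega>" and cv: "convex \<Omega>" and fin: "emeasure lebesgue \<Omega> = ennreal S"
        unfolding A_def by auto
      obtain C where C: "\<And>j. j \<le> n \<Longrightarrow> open (C j) \<and> convex (C j) \<and> emeasure lebesgue (C j) = ennreal T"
        and cov: "\<Omega> \<subseteq> (\<Union>j\<le>n. C j)"
        using cover[OF op cv fin T0 TS] unfolding n_def by blast
      have "I \<Omega> \<le> (\<Sum>j\<le>n. I (C j))"
        unfolding I_def by (rule int_union[OF hm _ cov]) (use C in auto)
      also have "\<dots> \<le> (\<Sum>j\<le>n. ennreal (T * q powr p))"
        apply (rule sum_mono, rule bT) unfolding A_def using C by blast
      also have "\<dots> = ennreal (real (n+1) * (T * q powr p))"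
        using T0 by (subst sum_ennreal) auto
      finally have "I \<Omega> / ennreal S \<le> ennreal (real (n+1) * (T * q powr p)) / ennreal S"
        by (rule divide_right_mono_ennreal)
      also have "\<dots> = ennreal (c * q powr p)"
        using T0 TS by (simp add: divide_ennreal cn)
      finally show "ennreal_powr (I \<Omega> / ennreal S) (1/p) \<le> ennreal ((c * q powr p) powr (1/p))"
        by (rule powr_le2) (use c0 in simp)
    qed
  qed
  have part1: "ennreal_powr (pV_norm p S f) p \<le> ennreal c * ennreal_powr (pV_norm p T f) p"
  proof (cases "pV_norm p T f")
    case top
    then show ?thesis using c0 by (simp add: ennreal_powr_def)
  next
    case (real q)
    have "pV_norm p S f \<le> ennreal ((c * q powr p) powr (1/p))"
      by (rule key) (use real in auto)
    then obtain m where m: "pV_norm p S f = ennreal m" "0 \<le> m" "m \<le> (c * q powr p) powr (1/p)"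
      by (cases "pV_norm p S f") (auto simp: top_unique)
    have "m powr p \<le> ((c * q powr p) powr (1/p)) powr p"
      by (intro powr_mono2) (use m p0 in auto)
    also have "\<dots> = c * q powr p" using c0 p0 by (simp add: powr_powr)
    finally have "m powr p \<le> c * q powr p" .
    then show ?thesis using m real c0
      by (simp add: ennreal_powr_def ennreal_mult[symmetric])
  qed
  have part2: "ennreal c * ennreal_powr (pV_norm p T f) p \<le> 2 * ennreal_powr (pV_norm p T f) p"
  proof (rule mult_right_mono)
    have "ennreal c \<le> ennreal 2" by (rule ennreal_leI[OF c2])
    then show "ennreal c \<le> 2" by simp
  qed simp
  show ?thesis using part1 part2 unfolding c_def by simp
qed

end
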